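(* Let $d$ be a positive integer. There exists a matrix $A\in\mathbb{R}^{[4]\times[3]}$ such that (i) $A$ does not have an elimination ordering, and (ii) for every vector $b\in\mathbb{R}^{[4]}$ the solution graph $G(R(A,b))$ is connected.
   Context: Fix a positive integer $d$ and let $D=\{0,1,\dots,d\}$; $[n]=\{1,\dots,n\}$. For $A\in\mathbb{R}^{[m]\times[n]}$ and $b\in\mathbb{R}^{[m]}$, $R(A,b)=\{x\in D^{[n]} : Ax\ge b\}$. For $R\subseteq D^{[n]}$, the solution graph $G(R)$ is the undirected graph with vertex set $R$ in which $x,y$ are adjacent iff they differ in exactly one coordinate. A matrix $A=(a_{ij})$ with column index set $J$ can be eliminated at column $j\in J$ if (i) for every row $i$ with $a_{ij}>0$ we have $a_{ij'}=0$ for all $j'\in J\setminus\{j\}$, or (ii) for every row $i$ with $a_{ij}<0$ we have $a_{ij'}=0$ for all $j'\in J\setminus\{j\}$. For $J'\subseteq[n]$, $\mathrm{elm}(A,J')$ is the submatrix of $A$ obtained by deleting the columns indexed by $J'$. A sequence $(j_1,\dots,j_n)$ of the elements of $[n]$ is an elimination ordering (EO) of $A$ if for every $t\in[n]$ the matrix $\mathrm{elm}(A,\{j_1,\dots,j_{t-1}\})$ can be eliminated at column $j_t$. *)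

theory Defs
  imports Complex_Main "HOL-Library.FuncSet"
begin

text \<open>Matrices A in R^{[m] x [n]} are functions nat => nat => real (only entries with
row index in {1..m} and column index in {1..n} are used); vectors b in R^{[m]} are
functions nat => real; points x in D^{[n]} with D = {0..d} are extensional functions
on {1..n} with values in {0..d}.\<close>

definition sol_set :: "nat \<Rightarrow> nat \<Rightarrow> nat \<Rightarrow> (nat \<Rightarrow> nat \<Rightarrow> real) \<Rightarrow> (nat \<Rightarrow> real) \<Rightarrow> (nat \<Rightarrow> nat) set" where
  "sol_set d m n A b =
     {x \<in> {1..n} \<rightarrow>\<^sub>E {0..d}. \<forall>i\<in>{1..m}. (\<Sum>j=1..n. A i j * real (x j)) \<ge> b i}"

definition sg_adj :: "nat \<Rightarrow> (nat \<Rightarrow> nat) set \<Rightarrow> ((nat \<Rightarrow> nat) \<times> (nat \<Rightarrow> nat)) set" where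
  "sg_adj n R = {(x, y). x \<in> R \<and> y \<in> R \<and> card {j\<in>{1..n}. x j \<noteq> y j} = 1}"

definition sg_connected :: "nat \<Rightarrow> (nat \<Rightarrow> nat) set \<Rightarrow> bool" where
  "sg_connected n R \<longleftrightarrow> (\<forall>x\<in>R. \<forall>y\<in>R. (x, y) \<in> (sg_adj n R)\<^sup>*)"

definition can_elim :: "(nat \<Rightarrow> nat \<Rightarrow> real) \<Rightarrow> nat \<Rightarrow> nat set \<Rightarrow> nat \<Rightarrow> bool" where
  "can_elim A m J j \<longleftrightarrow>
     (\<forall>i\<in>{1..m}. A i j > 0 \<longrightarrow> (\<forall>j'\<in>J - {j}. A i j' = 0)) \<or>
     (\<forall>i\<in>{1..m}. A i j < 0 \<longrightarrow> (\<forall>j'\<in>J - {j}. A i j' = 0))"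

definition is_EO :: "(nat \<Rightarrow> nat \<Rightarrow> real) \<Rightarrow> nat \<Rightarrow> nat \<Rightarrow> nat list \<Rightarrow> bool" where
  "is_EO A m n js \<longleftrightarrow> distinct js \<and> set js = {1..n} \<and>
     (\<forall>t<n. can_elim A m ({1..n} - set (take t js)) (js ! t))"

definition has_EO :: "(nat \<Rightarrow> nat \<Rightarrow> real) \<Rightarrow> nat \<Rightarrow> nat \<Rightarrow> bool" where
  "has_EO A m n \<longleftrightarrow> (\<exists>js. is_EO A m n js)"

end

theory Submission
  imports Defs
begin

definition Am :: "nat \<Rightarrow> nat \<Rightarrow> real" where
  "Am i j = (if i = 1 then (if j = 1 \<or> j = 2 then -1 else 0)
    else if i = 2 then (if j = 1 then -1 else if j = 2 then 1 else 0)
    else if i = 3 then (if j = 1 then 1 else if j = 3 then -1 else 0)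
    else if i = 4 then (if j = 1 \<or> j = 3 then 1 else 0) else 0)"

lemma set13: "{1..3::nat} = {1,2,3}" by auto
lemma set14: "{1..4::nat} = {1,2,3,4}" by auto
lemma sum3: "(\<Sum>j=1..3::nat. f j) = f 1 + f 2 + (f 3 :: real)"
  unfolding set13 by simp

lemma mem_R:
  "x \<in> sol_set d 4 3 Am b \<longleftrightarrow> x \<in> {1..3} \<rightarrow>\<^sub>E {0..d} \<and>
     - real (x 1) - real (x 2) \<ge> b 1 \<and> real (x 2) - real (x 1) \<ge> b 2 \<and>
     real (x 1) - real (x 3) \<ge> b 3 \<and> real (x 1) + real (x 3) \<ge> b 4"
  unfolding sol_set_def set14 sum3 by (simp add: Am_def)

lemma PiE_upd13:
  fixes d v :: nat
  assumes "x \<in> {1..3} \<rightarrow>\<^sub>E {0..d}" "j \<in> {1..3::nat}" "v \<le> d"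
  shows "x(j := v) \<in> {1..3} \<rightarrow>\<^sub>E {0..d}"
proof -
  have "x(j := v) \<in> Pi\<^sub>E (insert j {1..3}) (\<lambda>_. {0..d})"
    using assms by (intro PiE_fun_upd) auto
  then show ?thesis using assms(2) by (simp add: insert_absorb)
qed

lemma step1:
  assumes "x \<in> R" "x(j := v) \<in> R" "j \<in> {1..3::nat}"
  shows "(x, x(j := v)) \<in> (sg_adj 3 R)\<^sup>*"
proof (cases "v = x j")
  case True
  then show ?thesis by simp
next
  case False
  have "{j'\<in>{1..3}. x j' \<noteq> (x(j := v)) j'} = {j}" using False assms(3) by auto
  then have "(x, x(j := v)) \<in> sg_adj 3 R" using assms unfolding sg_adj_def by simp
  then show ?thesis by blast
qed

lemma same_slice:
  assumes x: "x \<in> sol_set d 4 3 Am b" and y: "y \<in> sol_set d 4 3 Am b" and e: "x 1 = y 1"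
  shows "(x, y) \<in> (sg_adj 3 (sol_set d 4 3 Am b))\<^sup>*"
proof -
  let ?R = "sol_set d 4 3 Am b"
  have xP: "x \<in> {1..3} \<rightarrow>\<^sub>E {0..d}" and yP: "y \<in> {1..3} \<rightarrow>\<^sub>E {0..d}"
    using x y by (auto simp: mem_R)
  have y2: "y 2 \<le> d" and y3: "y 3 \<le> d" using yP by auto
  have w: "x(2 := y 2) \<in> ?R"
    using x y e PiE_upd13[OF xP _ y2] by (simp add: mem_R)
  have w2: "x(2 := y 2, 3 := y 3) \<in> ?R"
    using x y e PiE_upd13[OF PiE_upd13[OF xP _ y2] _ y3] by (simp add: mem_R)
  have eq: "x(2 := y 2, 3 := y 3) = y"
  proof
    fix j
    show "(x(2 := y 2, 3 := y 3)) j = y j"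
    proof (cases "j \<in> {1..3}")
      case True
      then have "j = 1 \<or> j = 2 \<or> j = 3" by auto
      then show ?thesis using e by auto
    next
      case False
      then show ?thesis using xP yP by (auto simp: PiE_def extensional_def)
    qed
  qed
  have "(x, x(2 := y 2)) \<in> (sg_adj 3 ?R)\<^sup>*" using step1[OF x w] by simp
  moreover have "(x(2 := y 2), x(2 := y 2, 3 := y 3)) \<in> (sg_adj 3 ?R)\<^sup>*"
    using step1[OF w w2] by simp
  ultimately show ?thesis using eq by simp
qed

lemma up_step:
  assumes x: "x \<in> sol_set d 4 3 Am b" and y: "y \<in> sol_set d 4 3 Am b" and lt: "x 1 < y 1"
  shows "\<exists>z \<in> sol_set d 4 3 Am b. z 1 = Suc (x 1) \<and> (x, z) \<in> (sg_adj 3 (sol_set d 4 3 Am b))\<^sup>*"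
proof -
  let ?R = "sol_set d 4 3 Am b"
  have xP: "x \<in> {1..3} \<rightarrow>\<^sub>E {0..d}" and yP: "y \<in> {1..3} \<rightarrow>\<^sub>E {0..d}"
    using x y by (auto simp: mem_R)
  have y2: "y 2 \<le> d" using yP by auto
  have y1: "y 1 \<le> d" using yP by auto
  have s: "Suc (x 1) \<le> d" using lt y1 by simp
  have lt': "real (x 1) + 1 \<le> real (y 1)" using lt by linarith
  have w: "x(2 := y 2) \<in> ?R"
    using x y lt' PiE_upd13[OF xP _ y2] by (simp add: mem_R)
  have z: "x(2 := y 2, 1 := Suc (x 1)) \<in> ?R"
    using x y lt' PiE_upd13[OF PiE_upd13[OF xP _ y2] _ s] by (simp add: mem_R)
  have "(x, x(2 := y 2)) \<in> (sg_adj 3 ?R)\<^sup>*" using step1[OF x w] by simp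
  moreover have "(x(2 := y 2), x(2 := y 2, 1 := Suc (x 1))) \<in> (sg_adj 3 ?R)\<^sup>*"
    using step1[OF w z] by simp
  ultimately show ?thesis using z by (intro bexI[of _ "x(2 := y 2, 1 := Suc (x 1))"]) auto
qed

lemma conn_le:
  "\<forall>x y. x \<in> sol_set d 4 3 Am b \<longrightarrow> y \<in> sol_set d 4 3 Am b \<longrightarrow> x 1 \<le> y 1 \<longrightarrow> y 1 - x 1 = k
     \<longrightarrow> (x, y) \<in> (sg_adj 3 (sol_set d 4 3 Am b))\<^sup>*"
proof (induction k)
  case 0
  then show ?case using same_slice by (metis diff_is_0_eq le_antisym)
next
  case (Suc k)
  show ?case
  proof (intro allI impI)
    fix x y assume x: "x \<in> sol_set d 4 3 Am b" and y: "y \<in> sol_set d 4 3 Am b"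
      and le: "x 1 \<le> y 1" and k: "y 1 - x 1 = Suc k"
    then have lt: "x 1 < y 1" by simp
    obtain z where z: "z \<in> sol_set d 4 3 Am b" "z 1 = Suc (x 1)"
      "(x, z) \<in> (sg_adj 3 (sol_set d 4 3 Am b))\<^sup>*"
      using up_step[OF x y lt] by blast
    have "(z, y) \<in> (sg_adj 3 (sol_set d 4 3 Am b))\<^sup>*"
      using Suc.IH z y lt k by simp
    then show "(x, y) \<in> (sg_adj 3 (sol_set d 4 3 Am b))\<^sup>*" using z(3) by simp
  qed
qed

lemma sym_adj: "sym (sg_adj n R)"
proof -
  have "\<And>x y. {j\<in>{1..n}. x j \<noteq> y j} = {j\<in>{1..n}. y j \<noteq> (x j :: nat)}" by auto
  note * = this
  show ?thesis
  proof (rule symI)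
    fix x y assume "(x, y) \<in> sg_adj n R"
    then show "(y, x) \<in> sg_adj n R" using *[of x y] unfolding sg_adj_def by simp
  qed
qed

lemma connected: "sg_connected 3 (sol_set d 4 3 Am b)"
  unfolding sg_connected_def
proof (intro ballI)
  fix x y assume x: "x \<in> sol_set d 4 3 Am b" and y: "y \<in> sol_set d 4 3 Am b"
  show "(x, y) \<in> (sg_adj 3 (sol_set d 4 3 Am b))\<^sup>*"
  proof (cases "x 1 \<le> y 1")
    case True
    then show ?thesis using conn_le x y by blast
  next
    case False
    then have "(y, x) \<in> (sg_adj 3 (sol_set d 4 3 Am b))\<^sup>*" using conn_le x y by simp
    then show ?thesis using sym_rtrancl[OF sym_adj] unfolding sym_def by blast
  qed
qed

lemma no_elim: "j \<in> {1..3} \<Longrightarrow> \<not> can_elim Am 4 {1..3} j"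
  unfolding can_elim_def set14 set13 by (auto simp: Am_def)

lemma no_EO: "\<not> has_EO Am 4 3"
proof
  assume "has_EO Am 4 3"
  then obtain js where js: "is_EO Am 4 3 js" unfolding has_EO_def by blast
  then have "set js = {1..3}" unfolding is_EO_def by simp
  then have ne: "js \<noteq> []" by auto
  then have "js ! 0 \<in> {1..3}" using \<open>set js = {1..3}\<close> nth_mem by (metis length_greater_0_conv)
  moreover have "\<forall>t<3. can_elim Am 4 ({1..3} - set (take t js)) (js ! t)"
    using js unfolding is_EO_def by simp
  then have "can_elim Am 4 ({1..3} - set (take 0 js)) (js ! 0)"
    by (metis zero_less_numeral)
  ultimately show False using no_elim by simp
qed

theorem lemma1:
  fixes d :: nat
  assumes "d \<ge> 1"
  shows "\<exists>A :: nat \<Rightarrow> nat \<Rightarrow> real.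
           \<not> has_EO A 4 3 \<and> (\<forall>b :: nat \<Rightarrow> real. sg_connected 3 (sol_set d 4 3 A b))"
  using no_EO connected by blast

end
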